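(* Let $Z$ be any $n\times n$ complex matrix with singular values $r_1,\dots,r_n$, and let $U$ be any $n\times n$ unitary matrix. Then $$\prod_{k=1}^n\frac{|1-r_k|}{1+r_k}\le \frac{|\det(I-Z^*Z)|}{|\det(I-UZ)|^2},$$ where a fraction with zero denominator is interpreted as $+\infty$.
   Context: $Z^*$ denotes the conjugate transpose of $Z$ and $I$ the $n\times n$ identity matrix. *)

theory Defs
  imports "Jordan_Normal_Form.Char_Poly"
begin

definition conj_transpose :: "complex mat \<Rightarrow> complex mat" where
  "conj_transpose A = transpose_mat (map_mat cnj A)"

definition unitary_mat :: "nat \<Rightarrow> complex mat \<Rightarrow> bool" where
  "unitary_mat n U \<longleftrightarrow> U \<in> carrier_mat n n \<and> conj_transpose U * U = 1\<^sub>m n"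

text \<open>rs lists the singular values of the n x n matrix Z, counted with
  multiplicity: the nonnegative square roots of the eigenvalues of Z* Z,
  i.e. char_poly (Z* Z) = prod_k (X - r_k^2).\<close>
definition singular_values :: "nat \<Rightarrow> complex mat \<Rightarrow> real list \<Rightarrow> bool" where
  "singular_values n Z rs \<longleftrightarrow> Z \<in> carrier_mat n n \<and> length rs = n \<and>
     (\<forall>r \<in> set rs. r \<ge> 0) \<and>
     char_poly (conj_transpose Z * Z) = (\<Prod>r\<leftarrow>rs. [:- complex_of_real (r\<^sup>2), 1:])"

end

theory Submission
  imports Defs "Jordan_Normal_Form.Schur_Decomposition" "HOL-Analysis.L2_Norm"
begin

abbreviation ct where "ct \<equiv> conj_transpose"

lemma ct_carrier: "A \<in> carrier_mat n m \<Longrightarrow> ct A \<in> carrier_mat m n"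
  unfolding conj_transpose_def by auto

lemma ct_dim[simp]: "dim_row (ct A) = dim_col A" "dim_col (ct A) = dim_row A"
  unfolding conj_transpose_def by auto

lemma ct_index[simp]: "i < dim_col A \<Longrightarrow> j < dim_row A \<Longrightarrow> ct A $$ (i,j) = cnj (A $$ (j,i))"
  unfolding conj_transpose_def by auto

lemma col_carrier'[simp]: "A \<in> carrier_mat n m \<Longrightarrow> col A j \<in> carrier_vec n"
  by (rule carrier_vecI) simp

lemma row_carrier'[simp]: "A \<in> carrier_mat n m \<Longrightarrow> row A j \<in> carrier_vec m"
  by (rule carrier_vecI) simp

lemma ct_ct[simp]: "ct (ct A) = A"
  by (rule eq_matI) auto

lemma ct_one[simp]: "ct (1\<^sub>m n) = 1\<^sub>m n"
  by (rule eq_matI) auto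

lemma ct_minus: assumes "A \<in> carrier_mat n m" "B \<in> carrier_mat n m"
  shows "ct (A - B) = ct A - ct B"
  using assms by (intro eq_matI) auto

interpretation cnj_hom: comm_ring_hom cnj
  by unfold_locales auto

lemma det_ct: assumes "A \<in> carrier_mat n n" shows "det (ct A) = cnj (det A)"
proof -
  have "det (ct A) = det (map_mat cnj A)" unfolding conj_transpose_def
    apply (rule det_transpose) using assms by simp
  also have "\<dots> = cnj (det A)" by (rule cnj_hom.hom_det)
  finally show ?thesis .
qed

lemma unitary_right: assumes "unitary_mat n V" shows "V * ct V = 1\<^sub>m n"
proof -
  have V: "V \<in> carrier_mat n n" and e: "ct V * V = 1\<^sub>m n" using assms unfolding unitary_mat_def by auto
  show ?thesis by (rule mat_mult_left_right_inverse[OF ct_carrier[OF V] V e])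
qed

lemma unitary_det: assumes "unitary_mat n V" shows "cmod (det V) = 1"
proof -
  have V: "V \<in> carrier_mat n n" and e: "ct V * V = 1\<^sub>m n" using assms unfolding unitary_mat_def by auto
  have "det (ct V * V) = det (ct V) * det V" by (rule det_mult[OF ct_carrier[OF V] V])
  hence "det (ct V) * det V = 1" using e by simp
  hence "cnj (det V) * det V = 1" using det_ct[OF V] by simp
  hence "complex_of_real ((cmod (det V))^2) = 1"
    by (simp only: of_real_power complex_norm_square[symmetric] mult.commute)
  hence "(cmod (det V))^2 = 1" by (simp only: of_real_eq_1_iff)
  thus ?thesis using norm_ge_zero[of "det V"] unfolding power2_eq_1_iff by linarith
qed

lemma ct_mult': assumes A: "A \<in> carrier_mat n k" and B: "B \<in> carrier_mat k m"
  shows "ct (A * B) = ct B * ct A"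
proof (rule eq_matI)
  show "dim_row (ct (A * B)) = dim_row (ct B * ct A)" using A B by simp
  show "dim_col (ct (A * B)) = dim_col (ct B * ct A)" using A B by simp
  fix i j assume i: "i < dim_row (ct B * ct A)" and j: "j < dim_col (ct B * ct A)"
  hence i: "i < m" and j: "j < n" using A B by auto
  have "ct (A * B) $$ (i, j) = cnj (row A j \<bullet> col B i)" using A B i j by simp
  also have "\<dots> = (\<Sum>l<k. cnj (A $$ (j,l)) * cnj (B $$ (l,i)))"
    using A B i j by (simp add: scalar_prod_def atLeast0LessThan)
  also have "\<dots> = row (ct B) i \<bullet> col (ct A) j"
    using A B i j by (simp add: scalar_prod_def atLeast0LessThan mult.commute)
  also have "\<dots> = (ct B * ct A) $$ (i,j)" using A B i j by simp
  finally show "ct (A * B) $$ (i, j) = (ct B * ct A) $$ (i, j)" .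
qed

lemma gram_diag: assumes M: "M \<in> carrier_mat n m" and j: "j < m"
  shows "(ct M * M) $$ (j,j) = of_real (\<Sum>i<n. (cmod (M $$ (i,j)))^2)"
proof -
  have "(ct M * M) $$ (j,j) = row (ct M) j \<bullet> col M j" using M j by simp
  also have "\<dots> = (\<Sum>i<n. cnj (M $$ (i,j)) * M $$ (i,j))"
    using M j by (simp add: scalar_prod_def atLeast0LessThan)
  also have "\<dots> = (\<Sum>i<n. of_real ((cmod (M $$ (i,j)))^2))"
    by (intro sum.cong refl) (simp only: of_real_power[symmetric] complex_norm_square mult.commute)
  finally show ?thesis by simp
qed

lemma gram_entry: assumes M: "M \<in> carrier_mat n m" and i: "i < m" and j: "j < m"
  shows "(ct M * M) $$ (i,j) = col M j \<bullet>c col M i"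
  using M i j by (simp add: scalar_prod_def atLeast0LessThan mult.commute)

lemma cscal_smult: assumes "v \<in> carrier_vec n" "w \<in> carrier_vec n"
  shows "(a \<cdot>\<^sub>v v) \<bullet>c (b \<cdot>\<^sub>v w) = a * cnj b * (v \<bullet>c (w :: complex vec))"
  using assms by (simp add: scalar_prod_def sum_distrib_left ac_simps)

lemma cscal_real: fixes w :: "complex vec" assumes "w \<in> carrier_vec n"
  shows "w \<bullet>c w = of_real (Re (w \<bullet>c w))" "Re (w \<bullet>c w) \<ge> 0"
proof -
  have "w \<bullet>c w \<ge> 0" by (rule conjugate_square_ge_0_vec)
  thus "w \<bullet>c w = of_real (Re (w \<bullet>c w))" "Re (w \<bullet>c w) \<ge> 0"
    by (auto simp: less_eq_complex_def complex_eq_iff)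
qed

lemma sqrt_inv_sq: "x > 0 \<Longrightarrow> complex_of_real (1 / sqrt x * (1 / sqrt x) * x) = 1"
proof -
  assume x: "x > 0"
  have "sqrt x * sqrt x = x" using x by simp
  hence "1 / sqrt x * (1 / sqrt x) * x = 1" using x by (simp add: field_simps)
  thus ?thesis by simp
qed

definition nrmz :: "complex vec \<Rightarrow> complex vec" where
  "nrmz w = complex_of_real (1 / sqrt (Re (w \<bullet>c w))) \<cdot>\<^sub>v w"

lemma unitary_completion: assumes u: "u \<in> carrier_vec n" and u1: "u \<bullet>c u = 1" and n: "n > 0"
  shows "\<exists>W. unitary_mat n W \<and> col W 0 = u"
proof -
  have u0: "u \<noteq> 0\<^sub>v n" using u1 u by auto
  interpret cof_vec_space n "TYPE(complex)" .
  define b where "b = basis_completion u"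
  from basis_completion[OF u u0, folded b_def]
  have span_b: "span (set b) = carrier_vec n" and dist_b: "distinct b" 
    and indep: "\<not> lin_dep (set b)" and b: "set b \<subseteq> carrier_vec n" and hdb: "hd b = u" 
    and len_b: "length b = n" by auto
  from hdb len_b n obtain vs where bv: "b = u # vs" by (cases b, auto)
  define ws where "ws = gram_schmidt n b"
  from gram_schmidt_result[OF b dist_b indep ws_def]
  have ws: "set ws \<subseteq> carrier_vec n" "corthogonal ws" "length ws = n" 
    by (auto simp: len_b)
  from gram_schmidt_hd[OF u, of vs, folded bv] have hdws: "hd ws = u" unfolding ws_def .
  define ws' where "ws' = map nrmz ws"
  define W where "W = mat_of_cols n ws'"
  have wsi: "i < n \<Longrightarrow> ws ! i \<in> carrier_vec n" for i using ws by auto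
  have ws'i: "i < n \<Longrightarrow> ws' ! i = nrmz (ws ! i)" for i using ws unfolding ws'_def by auto
  have W: "W \<in> carrier_mat n n" unfolding W_def ws'_def using ws by auto
  have colW: "i < n \<Longrightarrow> col W i = ws' ! i" for i
    unfolding W_def by (rule col_mat_of_cols, insert ws, auto simp: ws'_def nrmz_def)
  have ws0: "ws ! 0 = u" using hdws n ws(3) by (cases ws, auto)
  have "u \<bullet>c u = of_real 1" using u1 by simp
  hence "Re (u \<bullet>c u) = 1" by simp
  hence "nrmz u = u" unfolding nrmz_def by simp
  hence col0: "col W 0 = u" using colW[OF n] ws'i[OF n] ws0 by simp
  have "ct W * W = 1\<^sub>m n"
  proof (rule eq_matI)
    show "dim_row (ct W * W) = dim_row (1\<^sub>m n)" "dim_col (ct W * W) = dim_col (1\<^sub>m n)" using W by auto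
    fix i j assume "i < dim_row (1\<^sub>m n)" "j < dim_col (1\<^sub>m n)"
    hence i: "i < n" and j: "j < n" by auto
    let ?ci = "complex_of_real (1 / sqrt (Re (ws ! i \<bullet>c ws ! i)))"
    let ?cj = "complex_of_real (1 / sqrt (Re (ws ! j \<bullet>c ws ! j)))"
    have "(ct W * W) $$ (i,j) = ws' ! j \<bullet>c ws' ! i" using gram_entry[OF W i j] colW i j by simp
    also have "\<dots> = ?cj * cnj ?ci * (ws ! j \<bullet>c ws ! i)"
      unfolding ws'i[OF i] ws'i[OF j] nrmz_def by (rule cscal_smult[OF wsi[OF j] wsi[OF i]])
    also have "\<dots> = 1\<^sub>m n $$ (i,j)"
    proof (cases "i = j")
      case True
      have ne: "ws ! j \<bullet>c ws ! j \<noteq> 0" using corthogonalD[OF ws(2), of j j] j ws(3) by auto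
      note r = cscal_real[OF wsi[OF j]]
      have pos: "Re (ws ! j \<bullet>c ws ! j) > 0" using ne r by (metis less_eq_real_def of_real_0)
      have "?cj * cnj ?cj * (ws ! j \<bullet>c ws ! j) = of_real (1 / sqrt (Re (ws ! j \<bullet>c ws ! j)) * (1 / sqrt (Re (ws ! j \<bullet>c ws ! j))) * Re (ws ! j \<bullet>c ws ! j))"
        by (subst r(1), simp only: complex_cnj_complex_of_real of_real_mult)
      also have "\<dots> = 1" using pos by (simp only: sqrt_inv_sq)
      also have "1 = 1\<^sub>m n $$ (j,j)" using j by simp
      finally show ?thesis unfolding True .
    next
      case False
      have "ws ! j \<bullet>c ws ! i = 0" using corthogonalD[OF ws(2), of j i] i j ws(3) False by auto
      thus ?thesis using False i j by simp
    qed
    finally show "(ct W * W) $$ (i,j) = 1\<^sub>m n $$ (i,j)" .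
  qed
  thus ?thesis using W col0 unfolding unitary_mat_def by blast
qed

lemma nrmz_unit: assumes c: "c \<in> carrier_vec n" and c0: "c \<noteq> 0\<^sub>v n"
  shows "nrmz c \<in> carrier_vec n" "nrmz c \<bullet>c nrmz c = 1"
    "c = complex_of_real (sqrt (Re (c \<bullet>c c))) \<cdot>\<^sub>v nrmz c"
proof -
  note r = cscal_real[OF c]
  have ne: "c \<bullet>c c \<noteq> 0" using c c0 by simp
  have pos: "Re (c \<bullet>c c) > 0" using ne r by (metis less_eq_real_def of_real_0)
  let ?a = "complex_of_real (1 / sqrt (Re (c \<bullet>c c)))"
  show "nrmz c \<in> carrier_vec n" unfolding nrmz_def using c by simp
  have "nrmz c \<bullet>c nrmz c = ?a * cnj ?a * (c \<bullet>c c)" unfolding nrmz_def by (rule cscal_smult[OF c c])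
  also have "\<dots> = of_real (1 / sqrt (Re (c \<bullet>c c)) * (1 / sqrt (Re (c \<bullet>c c))) * Re (c \<bullet>c c))"
    by (subst r(1), simp only: complex_cnj_complex_of_real of_real_mult)
  also have "\<dots> = 1" using pos by (simp only: sqrt_inv_sq)
  finally show "nrmz c \<bullet>c nrmz c = 1" .
  have "sqrt (Re (c \<bullet>c c)) * (1 / sqrt (Re (c \<bullet>c c))) = 1" using pos by simp
  hence "complex_of_real (sqrt (Re (c \<bullet>c c))) * ?a = 1"
    by (metis of_real_1 of_real_mult)
  thus "c = complex_of_real (sqrt (Re (c \<bullet>c c))) \<cdot>\<^sub>v nrmz c"
    unfolding nrmz_def smult_smult_assoc by simp
qed

lemma clear_col0: assumes M: "M \<in> carrier_mat n n" and n: "n > 0"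
  shows "\<exists>W. unitary_mat n W \<and> (\<forall>i. 0 < i \<and> i < n \<longrightarrow> (ct W * M) $$ (i,0) = 0)"
proof (cases "col M 0 = 0\<^sub>v n")
  case True
  have "unitary_mat n (1\<^sub>m n)" unfolding unitary_mat_def by simp
  moreover have "(ct (1\<^sub>m n) * M) $$ (i,0) = 0" if "i < n" for i
  proof -
    have "(ct (1\<^sub>m n) * M) $$ (i,0) = M $$ (i,0)" using M by simp
    also have "\<dots> = col M 0 $ i" using M that n by simp
    finally show ?thesis using True that by simp
  qed
  ultimately show ?thesis by blast
next
  case False
  let ?c = "col M 0"
  have c: "?c \<in> carrier_vec n" using M by (simp add: carrier_vecI)
  note nu = nrmz_unit[OF c False]
  from unitary_completion[OF nu(1) nu(2) n] obtain W where W: "unitary_mat n W"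
    and W0: "col W 0 = nrmz ?c" by blast
  have Wc: "W \<in> carrier_mat n n" and WW: "ct W * W = 1\<^sub>m n" using W unfolding unitary_mat_def by auto
  have "(ct W * M) $$ (i,0) = 0" if i: "0 < i" "i < n" for i
  proof -
    let ?s = "complex_of_real (sqrt (Re (?c \<bullet>c ?c)))"
    have "(ct W * M) $$ (i,0) = row (ct W) i \<bullet> ?c" using Wc M i n by simp
    also have "\<dots> = row (ct W) i \<bullet> (?s \<cdot>\<^sub>v col W 0)" using nu(3) W0 by simp
    also have "\<dots> = ?s * (row (ct W) i \<bullet> col W 0)"
      by (rule scalar_prod_smult_distrib[of _ n], insert Wc ct_carrier[OF Wc] i, auto)
    also have "row (ct W) i \<bullet> col W 0 = (ct W * W) $$ (i,0)" using Wc i n by simp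
    also have "\<dots> = 0" using WW i n by simp
    finally show ?thesis by simp
  qed
  thus ?thesis using W by blast
qed

lemma hadamard: assumes "M \<in> carrier_mat n n"
  shows "(cmod (det M))^2 \<le> (\<Prod>j<n. \<Sum>i<n. (cmod (M $$ (i,j)))^2)"
  using assms
proof (induction n arbitrary: M)
  case 0
  hence "M = 1\<^sub>m 0" by (intro eq_matI) auto
  thus ?case by simp
next
  case (Suc m M)
  let ?n = "Suc m"
  have M: "M \<in> carrier_mat ?n ?n" by fact
  from clear_col0[OF M] obtain W where W: "unitary_mat ?n W"
    and z: "\<And>i. 0 < i \<and> i < ?n \<Longrightarrow> (ct W * M) $$ (i,0) = 0" by blast
  have Wc: "W \<in> carrier_mat ?n ?n" and WW: "ct W * W = 1\<^sub>m ?n" using W unfolding unitary_mat_def by auto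
  have WW': "W * ct W = 1\<^sub>m ?n" by (rule unitary_right[OF W])
  define M' where "M' = ct W * M"
  have M': "M' \<in> carrier_mat ?n ?n" unfolding M'_def by (rule mult_carrier_mat[OF ct_carrier[OF Wc] M])
  have "W * M' = (W * ct W) * M" unfolding M'_def by (rule assoc_mult_mat[OF Wc ct_carrier[OF Wc] M, symmetric])
  hence WM': "W * M' = M" using WW' M by simp
  have "det M = det W * det M'" unfolding WM'[symmetric] by (rule det_mult[OF Wc M'])
  hence detM: "cmod (det M) = cmod (det M')" using unitary_det[OF W] by (simp add: norm_mult)
  have gram: "ct M' * M' = ct M * M"
  proof -
    have "ct M' * M' = (ct M * W) * (ct W * M)" unfolding M'_def ct_mult'[OF ct_carrier[OF Wc] M] by simp
    also have "\<dots> = ct M * (W * M')" unfolding M'_def[symmetric] by (rule assoc_mult_mat[OF ct_carrier[OF M] Wc M'])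
    also have "\<dots> = ct M * M" using WM' by simp
    finally show ?thesis .
  qed
  have colsum: "(\<Sum>i<?n. (cmod (M' $$ (i,j)))^2) = (\<Sum>i<?n. (cmod (M $$ (i,j)))^2)" if j: "j < ?n" for j
  proof -
    have "complex_of_real (\<Sum>i<?n. (cmod (M' $$ (i,j)))^2) = complex_of_real (\<Sum>i<?n. (cmod (M $$ (i,j)))^2)"
      using gram_diag[OF M' j] gram_diag[OF M j] gram by simp
    thus ?thesis by (simp only: of_real_eq_iff)
  qed
  define D where "D = mat_delete M' 0 0"
  have D: "D \<in> carrier_mat m m" unfolding D_def using mat_delete_carrier[OF M'] by simp
  have Dij: "i < m \<Longrightarrow> j < m \<Longrightarrow> D $$ (i,j) = M' $$ (Suc i, Suc j)" for i j
    unfolding D_def mat_delete_def using M' by simp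
  have z': "\<And>i. i < m \<Longrightarrow> M' $$ (Suc i, 0) = 0" using z unfolding M'_def by simp
  have "det M' = (\<Sum>i<?n. M' $$ (i,0) * cofactor M' i 0)" by (rule laplace_expansion_column[OF M'], simp)
  also have "\<dots> = M' $$ (0,0) * cofactor M' 0 0 + (\<Sum>i<m. M' $$ (Suc i,0) * cofactor M' (Suc i) 0)"
    by (rule sum.lessThan_Suc_shift)
  also have "(\<Sum>i<m. M' $$ (Suc i,0) * cofactor M' (Suc i) 0) = 0" using z' by simp
  also have "cofactor M' 0 0 = det D" unfolding cofactor_def D_def by simp
  finally have dM': "det M' = M' $$ (0,0) * det D" by simp
  have IH: "(cmod (det D))^2 \<le> (\<Prod>j<m. \<Sum>i<m. (cmod (D $$ (i,j)))^2)" by (rule Suc.IH[OF D])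
  also have "\<dots> \<le> (\<Prod>j<m. \<Sum>i<?n. (cmod (M' $$ (i,Suc j)))^2)"
  proof (rule prod_mono, rule conjI)
    fix j assume "j \<in> {..<m}" hence j: "j < m" by simp
    show "0 \<le> (\<Sum>i<m. (cmod (D $$ (i,j)))^2)" by (simp add: sum_nonneg)
    have "(\<Sum>i<m. (cmod (D $$ (i,j)))^2) = (\<Sum>i<m. (cmod (M' $$ (Suc i,Suc j)))^2)"
      using Dij j by simp
    also have "\<dots> \<le> (cmod (M' $$ (0,Suc j)))^2 + (\<Sum>i<m. (cmod (M' $$ (Suc i,Suc j)))^2)" by simp
    also have "\<dots> = (\<Sum>i<?n. (cmod (M' $$ (i,Suc j)))^2)" by (rule sum.lessThan_Suc_shift[symmetric])
    finally show "(\<Sum>i<m. (cmod (D $$ (i,j)))^2) \<le> (\<Sum>i<?n. (cmod (M' $$ (i,Suc j)))^2)" .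
  qed
  finally have IH': "(cmod (det D))^2 \<le> (\<Prod>j<m. \<Sum>i<?n. (cmod (M' $$ (i,Suc j)))^2)" .
  have h0: "(cmod (M' $$ (0,0)))^2 \<le> (\<Sum>i<?n. (cmod (M' $$ (i,0)))^2)"
    by (subst sum.lessThan_Suc_shift) (simp add: sum_nonneg)
  have "(cmod (det M))^2 = (cmod (M' $$ (0,0)))^2 * (cmod (det D))^2"
    unfolding detM dM' by (simp add: norm_mult power_mult_distrib)
  also have "\<dots> \<le> (\<Sum>i<?n. (cmod (M' $$ (i,0)))^2) * (\<Prod>j<m. \<Sum>i<?n. (cmod (M' $$ (i,Suc j)))^2)"
    by (rule mult_mono[OF h0 IH'], simp add: sum_nonneg, simp)
  also have "\<dots> = (\<Prod>j<?n. \<Sum>i<?n. (cmod (M' $$ (i,j)))^2)"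
    by (rule prod.lessThan_Suc_shift[symmetric])
  also have "\<dots> = (\<Prod>j<?n. \<Sum>i<?n. (cmod (M $$ (i,j)))^2)"
    by (rule prod.cong[OF refl], rule colsum, simp)
  finally show ?case .
qed

lemma exists_eigenvalue: fixes A :: "complex mat" assumes A: "A \<in> carrier_mat (Suc m) (Suc m)"
  shows "\<exists>e. eigenvalue A e"
proof -
  from char_poly_factorized[OF A] obtain as where cp: "char_poly A = (\<Prod>a\<leftarrow>as. [:- a, 1:])"
    and len: "length as = Suc m" by blast
  then obtain e rest where as: "as = e # rest" by (cases as, auto)
  have "poly (char_poly A) e = 0" unfolding cp as by simp
  thus ?thesis using eigenvalue_root_char_poly[OF A] by blast
qed

lemma ct_block: assumes V: "V \<in> carrier_mat m m"
  shows "ct (four_block_mat (1\<^sub>m 1) (0\<^sub>m 1 m) (0\<^sub>m m 1) V)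
    = four_block_mat (1\<^sub>m 1) (0\<^sub>m 1 m) (0\<^sub>m m 1) (ct V)"
  by (rule eq_matI, insert V, auto)

lemma schur_unitary: fixes A :: "complex mat" assumes "A \<in> carrier_mat n n"
  shows "\<exists>V. unitary_mat n V \<and> upper_triangular (ct V * A * V)"
  using assms
proof (induction n arbitrary: A)
  case 0
  have "unitary_mat 0 (1\<^sub>m 0)" unfolding unitary_mat_def by simp
  moreover have "upper_triangular (ct (1\<^sub>m 0) * A * 1\<^sub>m 0)" by (rule upper_triangularI) simp
  ultimately show ?case by blast
next
  case (Suc m A)
  let ?n = "Suc m"
  have A: "A \<in> carrier_mat ?n ?n" by fact
  from exists_eigenvalue[OF A] obtain e where "eigenvalue A e" by blast
  then obtain v where ev: "eigenvector A v e" unfolding eigenvalue_def by blast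
  hence v: "v \<in> carrier_vec ?n" and v0: "v \<noteq> 0\<^sub>v ?n" and Av: "A *\<^sub>v v = e \<cdot>\<^sub>v v"
    unfolding eigenvector_def using A by auto
  note nu = nrmz_unit[OF v v0]
  let ?u = "nrmz v"
  have Au: "A *\<^sub>v ?u = e \<cdot>\<^sub>v ?u"
  proof -
    let ?a = "complex_of_real (1 / sqrt (Re (v \<bullet>c v)))"
    have "A *\<^sub>v ?u = ?a \<cdot>\<^sub>v (A *\<^sub>v v)" unfolding nrmz_def by (rule mult_mat_vec[OF A v])
    also have "\<dots> = e \<cdot>\<^sub>v ?u" unfolding Av nrmz_def by (simp add: smult_smult_assoc mult.commute)
    finally show ?thesis .
  qed
  from unitary_completion[OF nu(1) nu(2)] obtain W where W: "unitary_mat ?n W"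
    and W0: "col W 0 = ?u" by blast
  have Wc: "W \<in> carrier_mat ?n ?n" and WW: "ct W * W = 1\<^sub>m ?n" using W unfolding unitary_mat_def by auto
  have WW': "W * ct W = 1\<^sub>m ?n" by (rule unitary_right[OF W])
  have ctW: "ct W \<in> carrier_mat ?n ?n" by (rule ct_carrier[OF Wc])
  define A' where "A' = ct W * A * W"
  have A': "A' \<in> carrier_mat ?n ?n" unfolding A'_def by (rule mult_carrier_mat[OF mult_carrier_mat[OF ctW A] Wc])
  have A'0: "A' $$ (i,0) = 0" if i: "0 < i" "i < ?n" for i
  proof -
    have "A' = ct W * (A * W)" unfolding A'_def by (rule assoc_mult_mat[OF ctW A Wc])
    hence "A' $$ (i,0) = row (ct W) i \<bullet> col (A * W) 0" using i ctW A Wc by simp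
    also have "col (A * W) 0 = A *\<^sub>v col W 0" by (rule col_mult2[OF A Wc], simp)
    also have "\<dots> = e \<cdot>\<^sub>v col W 0" using Au W0 by simp
    also have "row (ct W) i \<bullet> (e \<cdot>\<^sub>v col W 0) = e * (row (ct W) i \<bullet> col W 0)"
      by (rule scalar_prod_smult_distrib[of _ ?n], insert ctW Wc i, auto)
    also have "row (ct W) i \<bullet> col W 0 = (ct W * W) $$ (i,0)" using ctW Wc i by simp
    also have "\<dots> = 0" using WW i by simp
    finally show ?thesis by simp
  qed
  obtain A1 A2 A0 A3 where splitA': "split_block A' 1 1 = (A1,A2,A0,A3)"
    by (cases "split_block A' 1 1", auto)
  from A' have "dim_row A' = 1 + m" "dim_col A' = 1 + m" by auto
  from split_block[OF splitA' this] have A1: "A1 \<in> carrier_mat 1 1" and A2: "A2 \<in> carrier_mat 1 m"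
    and A0: "A0 \<in> carrier_mat m 1" and A3: "A3 \<in> carrier_mat m m"
    and A'block: "A' = four_block_mat A1 A2 A0 A3" by auto
  have A0id: "A0 = 0\<^sub>m m 1"
    using splitA'[unfolded split_block_def Let_def] A'0 A' by auto
  from Suc.IH[OF A3] obtain V3 where V3: "unitary_mat m V3" and ut3: "upper_triangular (ct V3 * A3 * V3)"
    by blast
  have V3c: "V3 \<in> carrier_mat m m" and VV3: "ct V3 * V3 = 1\<^sub>m m" using V3 unfolding unitary_mat_def by auto
  have VV3': "V3 * ct V3 = 1\<^sub>m m" by (rule unitary_right[OF V3])
  have ctV3: "ct V3 \<in> carrier_mat m m" by (rule ct_carrier[OF V3c])
  define T3 where "T3 = ct V3 * A3 * V3"
  have T3: "T3 \<in> carrier_mat m m" unfolding T3_def by (rule mult_carrier_mat[OF mult_carrier_mat[OF ctV3 A3] V3c])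
  have sim3: "similar_mat_wit A3 T3 V3 (ct V3)"
  proof -
    have "V3 * T3 * ct V3 = (V3 * ct V3) * A3 * (V3 * ct V3)"
      unfolding T3_def using V3c ctV3 A3 by (simp add: assoc_mult_mat[of _ m m _ m _ m] mult_carrier_mat[of _ m m _ m])
    also have "\<dots> = A3" using VV3' A3 by simp
    finally show ?thesis unfolding similar_mat_wit_def Let_def using A3 T3 V3c ctV3 VV3 VV3' by auto
  qed
  have sim1: "similar_mat_wit A1 A1 (1\<^sub>m 1) (1\<^sub>m 1)" by (rule similar_mat_wit_refl[OF A1])
  have URA: "A2 = 1\<^sub>m 1 * (A2 * V3) * ct V3"
  proof -
    have "1\<^sub>m 1 * (A2 * V3) * ct V3 = A2 * (V3 * ct V3)" using A2 V3c ctV3 by simp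
    thus ?thesis using VV3' A2 by simp
  qed
  have LLA: "A0 = V3 * (0\<^sub>m m 1) * 1\<^sub>m 1" unfolding A0id using V3c by simp
  define P where "P = four_block_mat (1\<^sub>m 1) (0\<^sub>m 1 m) (0\<^sub>m m 1) V3"
  define T where "T = four_block_mat A1 (A2 * V3) (0\<^sub>m m 1) T3"
  from similar_mat_wit_four_block[OF sim1 sim3 URA LLA A1 A3 _ mult_carrier_mat[OF A2 V3c]]
  have sim: "similar_mat_wit A' T P (ct P)"
    unfolding A'block T_def P_def ct_block[OF V3c] by simp
  hence P: "P \<in> carrier_mat ?n ?n" and PQ: "P * ct P = 1\<^sub>m ?n" and QP: "ct P * P = 1\<^sub>m ?n"
    and A'PT: "A' = P * T * ct P" and T: "T \<in> carrier_mat ?n ?n"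
    unfolding similar_mat_wit_def Let_def using A' by auto
  have ctP: "ct P \<in> carrier_mat ?n ?n" by (rule ct_carrier[OF P])
  have utT: "upper_triangular T" unfolding T_def
    by (rule upper_triangular_four_block[OF A1 T3 _ ut3[folded T3_def]], rule upper_triangularI, insert A1, auto)
  define V where "V = W * P"
  have Vc: "V \<in> carrier_mat ?n ?n" unfolding V_def by (rule mult_carrier_mat[OF Wc P])
  have ctV: "ct V = ct P * ct W" unfolding V_def by (rule ct_mult'[OF Wc P])
  have "ct V * V = ct P * (ct W * W) * P" unfolding ctV unfolding V_def using ctP ctW Wc P
    by (simp add: assoc_mult_mat[of _ ?n ?n _ ?n _ ?n] mult_carrier_mat[of _ ?n ?n _ ?n])
  also have "\<dots> = 1\<^sub>m ?n" using QP WW ctP P by simp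
  finally have uV: "unitary_mat ?n V" unfolding unitary_mat_def using Vc by simp
  have "ct V * A * V = ct P * A' * P" unfolding ctV unfolding V_def A'_def using ctP ctW Wc P A
    by (simp add: assoc_mult_mat[of _ ?n ?n _ ?n _ ?n] mult_carrier_mat[of _ ?n ?n _ ?n])
  also have "\<dots> = (ct P * P) * T * (ct P * P)" unfolding A'PT using ctP P T
    by (simp add: assoc_mult_mat[of _ ?n ?n _ ?n _ ?n] mult_carrier_mat[of _ ?n ?n _ ?n])
  also have "\<dots> = T" using QP T by simp
  finally show ?case using uV utT by auto
qed

lemma lin_prod_mset: fixes as bs :: "complex list"
  assumes "(\<Prod>a\<leftarrow>as. [:-a,1:]) = (\<Prod>b\<leftarrow>bs. [:-b,1:])"
  shows "mset as = mset bs"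
  using assms
proof (induction as arbitrary: bs)
  case Nil
  show ?case
  proof (cases bs)
    case (Cons b bs')
    have "poly (\<Prod>b\<leftarrow>bs. [:-b,1:]) b = 0" unfolding Cons by simp
    hence False using Nil.prems by simp
    thus ?thesis ..
  qed simp
next
  case (Cons a as bs)
  have "poly (\<Prod>b\<leftarrow>bs. [:-b,1:]) a = 0" unfolding Cons.prems[symmetric] by simp
  hence "0 \<in> (-) a ` set bs" by (simp add: poly_prod_list prod_list_zero_iff)
  hence a: "a \<in> set bs" by auto
  have "(\<Prod>b\<leftarrow>bs. [:-b,1:]) = [:-a,1:] * (\<Prod>b\<leftarrow>remove1 a bs. [:-b,1:])"
    by (rule prod_list_map_remove1[OF a])
  hence "[:-a,1:] * (\<Prod>x\<leftarrow>as. [:-x,1:]) = [:-a,1:] * (\<Prod>b\<leftarrow>remove1 a bs. [:-b,1:])"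
    using Cons.prems by simp
  moreover have ne: "[:-a,1:] \<noteq> 0" by simp
  ultimately have "(\<Prod>x\<leftarrow>as. [:-x,1:]) = (\<Prod>b\<leftarrow>remove1 a bs. [:-b,1:])"
    by (simp only: mult_left_cancel[OF ne])
  from Cons.IH[OF this] have "mset as = mset (remove1 a bs)" .
  thus ?case using a by simp
qed

lemma mset_prod_eq: fixes g :: "'a \<Rightarrow> 'b :: comm_monoid_mult" assumes "mset as = mset bs" shows "(\<Prod>a\<leftarrow>as. g a) = (\<Prod>b\<leftarrow>bs. g b)"
proof -
  have "(\<Prod>a\<leftarrow>as. g a) = prod_mset (image_mset g (mset as))" by (simp flip: prod_mset_prod_list)
  also have "\<dots> = prod_mset (image_mset g (mset bs))" using assms by simp
  also have "\<dots> = (\<Prod>b\<leftarrow>bs. g b)" by (simp flip: prod_mset_prod_list)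
  finally show ?thesis .
qed

lemma plist: "prod_list (map f xs) = (\<Prod>k<length xs. f (xs ! k))"
  by (simp add: prod.list_conv_set_nth atLeast0LessThan)

lemma col_L2: assumes M: "M \<in> carrier_mat n n" and j: "j < n"
  shows "(\<Sum>i<n. (cmod (M $$ (i,j)))^2) = Re ((ct M * M) $$ (j,j))"
  using gram_diag[OF M j] by simp

lemma key_bound: assumes Z: "Z \<in> carrier_mat n n" and U: "unitary_mat n U"
  and V: "unitary_mat n V"
  shows "cmod (det (1\<^sub>m n - U * Z)) \<le> (\<Prod>j<n. 1 + sqrt (Re ((ct V * (ct Z * Z) * V) $$ (j,j))))"
proof -
  have Uc: "U \<in> carrier_mat n n" and UU: "ct U * U = 1\<^sub>m n" using U unfolding unitary_mat_def by auto
  have Vc: "V \<in> carrier_mat n n" and VV: "ct V * V = 1\<^sub>m n" using V unfolding unitary_mat_def by auto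
  have VV': "V * ct V = 1\<^sub>m n" by (rule unitary_right[OF V])
  have ctU: "ct U \<in> carrier_mat n n" by (rule ct_carrier[OF Uc])
  have ctV: "ct V \<in> carrier_mat n n" by (rule ct_carrier[OF Vc])
  have ctZ: "ct Z \<in> carrier_mat n n" by (rule ct_carrier[OF Z])
  note simps = assoc_mult_mat[of _ n n _ n _ n] mult_carrier_mat[of _ n n _ n]
  define B where "B = U * Z * V"
  have Bc: "B \<in> carrier_mat n n" unfolding B_def using Uc Z Vc by (simp add: simps)
  have ctB: "ct B = ct V * ct Z * ct U" unfolding B_def
    using ct_mult'[OF mult_carrier_mat[OF Uc Z] Vc] ct_mult'[OF Uc Z] ctV ctZ ctU by (simp add: simps)
  have gB: "ct B * B = ct V * (ct Z * Z) * V"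
  proof -
    have "ct B * B = ct V * ct Z * (ct U * U) * Z * V" unfolding ctB unfolding B_def using ctV ctZ ctU Uc Z Vc
      by (simp add: simps)
    also have "\<dots> = ct V * (ct Z * Z) * V" unfolding UU using ctV ctZ Z Vc by (simp add: simps)
    finally show ?thesis .
  qed
  have VBc: "V - B \<in> carrier_mat n n" by (rule minus_carrier_mat[OF Bc])
  have e1: "1\<^sub>m n - U * Z = (V - B) * ct V"
  proof -
    have "(V - B) * ct V = V * ct V - B * ct V" by (rule minus_mult_distrib_mat[OF Vc Bc ctV])
    also have "B * ct V = U * Z" unfolding B_def using Uc Z Vc ctV VV' by (simp add: simps)
    finally show ?thesis using VV' by simp
  qed
  have "det (1\<^sub>m n - U * Z) = det (V - B) * det (ct V)" unfolding e1 by (rule det_mult[OF VBc ctV])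
  hence d1: "cmod (det (1\<^sub>m n - U * Z)) = cmod (det (V - B))"
    using unitary_det[OF V] det_ct[OF Vc] by (simp add: norm_mult)
  define s where "s j = sqrt (Re ((ct V * (ct Z * Z) * V) $$ (j,j)))" for j
  have col: "(\<Sum>i<n. (cmod ((V - B) $$ (i,j)))^2) \<le> (1 + s j)^2" if j: "j < n" for j
  proof -
    have vn: "L2_set (\<lambda>i. cmod (V $$ (i,j))) {..<n} = 1"
      unfolding L2_set_def using col_L2[OF Vc j] VV j by simp
    have bn: "L2_set (\<lambda>i. cmod (B $$ (i,j))) {..<n} = s j"
      unfolding L2_set_def s_def using col_L2[OF Bc j] gB j by simp
    have "L2_set (\<lambda>i. cmod ((V - B) $$ (i,j))) {..<n} \<le> L2_set (\<lambda>i. cmod (V $$ (i,j)) + cmod (B $$ (i,j))) {..<n}"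
      by (rule L2_set_mono, insert Vc Bc j, auto simp: norm_triangle_ineq4)
    also have "\<dots> \<le> 1 + s j" using L2_set_triangle_ineq[of "\<lambda>i. cmod (V $$ (i,j))" "\<lambda>i. cmod (B $$ (i,j))" "{..<n}"]
      vn bn by simp
    finally have "sqrt (\<Sum>i<n. (cmod ((V - B) $$ (i,j)))^2) \<le> 1 + s j" unfolding L2_set_def .
    moreover have "0 \<le> (\<Sum>i<n. (cmod ((V - B) $$ (i,j)))^2)" by (simp add: sum_nonneg)
    ultimately show ?thesis by (metis real_sqrt_le_iff real_sqrt_pow2 sqrt_le_D)
  qed
  have s0: "0 \<le> s j" if j: "j < n" for j
  proof -
    have "Re ((ct V * (ct Z * Z) * V) $$ (j,j)) = (\<Sum>i<n. (cmod (B $$ (i,j)))^2)"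
      using col_L2[OF Bc j] gB by simp
    also have "\<dots> \<ge> 0" by (simp add: sum_nonneg)
    finally show ?thesis unfolding s_def by simp
  qed
  have "(cmod (det (V - B)))^2 \<le> (\<Prod>j<n. \<Sum>i<n. (cmod ((V - B) $$ (i,j)))^2)" by (rule hadamard[OF VBc])
  also have "\<dots> \<le> (\<Prod>j<n. (1 + s j)^2)"
    by (rule prod_mono, insert col, auto simp: sum_nonneg)
  also have "\<dots> = (\<Prod>j<n. 1 + s j)^2" by (simp add: prod_power_distrib)
  finally have "(cmod (det (V - B)))^2 \<le> (\<Prod>j<n. 1 + s j)^2" .
  hence "cmod (det (V - B)) \<le> (\<Prod>j<n. 1 + s j)"
    by (rule power2_le_imp_le, insert s0, auto intro: prod_nonneg add_nonneg_nonneg)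
  thus ?thesis unfolding d1 s_def .
qed

lemma final_arith: fixes A P D :: real
  assumes A: "A \<ge> 0" and P: "P > 0" and D: "D > 0" "D \<le> P"
  shows "A / P \<le> A * P / D^2"
proof -
  have "A / P = A * P / P^2" using P by (simp add: power2_eq_square)
  also have "\<dots> \<le> A * P / D^2"
    by (rule divide_left_mono, insert A P D, auto intro: power_mono)
  finally show ?thesis .
qed

theorem mainTheorem2:
  fixes n :: nat and Z U :: "complex mat" and rs :: "real list"
  assumes "Z \<in> carrier_mat n n"
    and "singular_values n Z rs"
    and "unitary_mat n U"
  shows "det (1\<^sub>m n - U * Z) \<noteq> 0 \<longrightarrow>
    (\<Prod>k<n. \<bar>1 - rs ! k\<bar> / (1 + rs ! k))
      \<le> cmod (det (1\<^sub>m n - conj_transpose Z * Z)) / (cmod (det (1\<^sub>m n - U * Z)))\<^sup>2"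
proof
  assume nz: "det (1\<^sub>m n - U * Z) \<noteq> 0"
  have Z: "Z \<in> carrier_mat n n" by fact
  have len: "length rs = n" and rs0: "\<And>r. r \<in> set rs \<Longrightarrow> r \<ge> 0"
    and cpH: "char_poly (ct Z * Z) = (\<Prod>r\<leftarrow>rs. [:- complex_of_real (r\<^sup>2), 1:])"
    using assms(2) unfolding singular_values_def by auto
  have rsk: "k < n \<Longrightarrow> rs ! k \<ge> 0" for k using rs0 len by auto
  define H where "H = ct Z * Z"
  have Hc: "H \<in> carrier_mat n n" unfolding H_def by (rule mult_carrier_mat[OF ct_carrier[OF Z] Z])
  from schur_unitary[OF Hc] obtain V where V: "unitary_mat n V" and ut: "upper_triangular (ct V * H * V)"
    by blast
  have Vc: "V \<in> carrier_mat n n" and VV: "ct V * V = 1\<^sub>m n" using V unfolding unitary_mat_def by auto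
  have VV': "V * ct V = 1\<^sub>m n" by (rule unitary_right[OF V])
  have ctV: "ct V \<in> carrier_mat n n" by (rule ct_carrier[OF Vc])
  note simps = assoc_mult_mat[of _ n n _ n _ n] mult_carrier_mat[of _ n n _ n]
  define T where "T = ct V * H * V"
  have Tc: "T \<in> carrier_mat n n" unfolding T_def using ctV Hc Vc by (simp add: simps)
  have "V * T * ct V = (V * ct V) * H * (V * ct V)" unfolding T_def using ctV Hc Vc by (simp add: simps)
  also have "\<dots> = H" using VV' Hc by simp
  finally have "similar_mat_wit H T V (ct V)" unfolding similar_mat_wit_def Let_def
    using Hc Tc Vc ctV VV VV' by auto
  hence "similar_mat H T" unfolding similar_mat_def by blast
  hence "char_poly H = char_poly T" by (rule char_poly_similar)
  also have "\<dots> = (\<Prod>a\<leftarrow>diag_mat T. [:- a, 1:])" by (rule char_poly_upper_triangular[OF Tc ut[folded T_def]])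
  finally have "(\<Prod>a\<leftarrow>diag_mat T. [:- a, 1:]) = (\<Prod>b\<leftarrow>map (\<lambda>r. complex_of_real (r\<^sup>2)) rs. [:- b, 1:])"
    using cpH unfolding H_def by (simp add: o_def)
  hence ms: "mset (diag_mat T) = mset (map (\<lambda>r. complex_of_real (r\<^sup>2)) rs)" by (rule lin_prod_mset)
  have diagT: "length (diag_mat T) = n" "\<And>j. j < n \<Longrightarrow> diag_mat T ! j = T $$ (j,j)"
    using Tc unfolding diag_mat_def by auto
  define P where "P = (\<Prod>k<n. 1 + rs ! k)"
  have P0: "P > 0" unfolding P_def
  proof (rule prod_pos)
    fix k assume "k \<in> {..<n}"
    hence "rs ! k \<ge> 0" using rsk by simp
    thus "0 < 1 + rs ! k" by simp
  qed
  have "(\<Prod>j<n. 1 + sqrt (Re (T $$ (j,j)))) = prod_list (map (\<lambda>x. 1 + sqrt (Re x)) (diag_mat T))"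
    unfolding plist diagT(1) using diagT(2) by simp
  also have "\<dots> = prod_list (map (\<lambda>x. 1 + sqrt (Re x)) (map (\<lambda>r. complex_of_real (r\<^sup>2)) rs))"
    by (rule mset_prod_eq[OF ms])
  also have "\<dots> = (\<Prod>k<n. 1 + \<bar>rs ! k\<bar>)" unfolding plist by (simp add: len)
  also have "\<dots> = P" unfolding P_def by (rule prod.cong[OF refl]) (simp add: rsk)
  finally have bnd: "cmod (det (1\<^sub>m n - U * Z)) \<le> P"
    using key_bound[OF Z assms(3) V] unfolding T_def H_def by simp
  have "poly (char_poly H) 1 = det (- char_matrix H 1)" by (rule char_poly_matrix[OF Hc])
  also have "- char_matrix H 1 = 1\<^sub>m n - H" using Hc by (intro eq_matI) (auto simp: char_matrix_def)
  finally have "det (1\<^sub>m n - H) = poly (\<Prod>r\<leftarrow>rs. [:- complex_of_real (r\<^sup>2), 1:]) 1"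
    using cpH unfolding H_def by simp
  also have "\<dots> = (\<Prod>k<n. complex_of_real (1 - (rs ! k)^2))"
    unfolding poly_prod_list plist len by (simp add: poly_prod)
  finally have dH: "det (1\<^sub>m n - H) = (\<Prod>k<n. complex_of_real (1 - (rs ! k)^2))" .
  have "cmod (det (1\<^sub>m n - H)) = (\<Prod>k<n. \<bar>1 - (rs ! k)^2\<bar>)"
    unfolding dH prod_norm[symmetric] norm_of_real ..
  also have "\<dots> = (\<Prod>k<n. \<bar>1 - rs ! k\<bar>) * P" unfolding P_def prod.distrib[symmetric]
  proof (rule prod.cong[OF refl])
    fix k assume "k \<in> {..<n}"
    hence "rs ! k \<ge> 0" using rsk by simp
    hence "\<bar>1 - (rs ! k)^2\<bar> = \<bar>(1 - rs ! k) * (1 + rs ! k)\<bar>" by (simp add: power2_eq_square algebra_simps)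
    also have "\<dots> = \<bar>1 - rs ! k\<bar> * (1 + rs ! k)" using \<open>rs ! k \<ge> 0\<close> by (simp add: abs_mult)
    finally show "\<bar>1 - (rs ! k)^2\<bar> = \<bar>1 - rs ! k\<bar> * (1 + rs ! k)" .
  qed
  finally have num: "cmod (det (1\<^sub>m n - ct Z * Z)) = (\<Prod>k<n. \<bar>1 - rs ! k\<bar>) * P" unfolding H_def .
  have lhs: "(\<Prod>k<n. \<bar>1 - rs ! k\<bar> / (1 + rs ! k)) = (\<Prod>k<n. \<bar>1 - rs ! k\<bar>) / P"
    unfolding P_def by (rule prod_dividef)
  show "(\<Prod>k<n. \<bar>1 - rs ! k\<bar> / (1 + rs ! k))
      \<le> cmod (det (1\<^sub>m n - conj_transpose Z * Z)) / (cmod (det (1\<^sub>m n - U * Z)))\<^sup>2"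
    unfolding lhs num
    by (rule final_arith, insert P0 bnd nz, auto intro: prod_nonneg)
qed
end
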